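(* Let $01234$ be a convex pentagon inscribed in a circle of radius $R$, with vertices in cyclic order and area $A$. Let $$a_0=|23|,\quad a_1=|34|,\quad a_2=|40|,\quad a_3=|01|,\quad a_4=|12|,$$ and let $X=|14|$. Put $p=a_2a_3$, $P=a_0a_1a_4$, $Q=a_0^2+a_1^2+a_4^2$, and $S=(a_0a_1)^2+(a_0a_4)^2+(a_1a_4)^2$. Then $$(4AR-pX)^2=PX^3+SX^2+PQX+P^2.$$
   Context: $|ij|$ denotes the distance between vertices $i$ and $j$. *)

theory Defs
  imports "HOL-Analysis.Analysis"
begin

definition inscribed_convex_pentagon :: "(nat \<Rightarrow> complex) \<Rightarrow> complex \<Rightarrow> real \<Rightarrow> bool" where
  "inscribed_convex_pentagon p c R \<longleftrightarrow> R > 0 \<and>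
     (\<exists>\<theta> :: nat \<Rightarrow> real.
        (\<forall>k<5. p k = c + complex_of_real R * cis (\<theta> k)) \<and>
        ((\<theta> 0 < \<theta> 1 \<and> \<theta> 1 < \<theta> 2 \<and> \<theta> 2 < \<theta> 3 \<and> \<theta> 3 < \<theta> 4 \<and> \<theta> 4 < \<theta> 0 + 2 * pi) \<or>
         (\<theta> 0 > \<theta> 1 \<and> \<theta> 1 > \<theta> 2 \<and> \<theta> 2 > \<theta> 3 \<and> \<theta> 3 > \<theta> 4 \<and> \<theta> 4 > \<theta> 0 - 2 * pi)))"

text \<open>Area of the polygon p 0, ..., p (n-1) by the shoelace formula.\<close>

definition polygon_area :: "nat \<Rightarrow> (nat \<Rightarrow> complex) \<Rightarrow> real" where
  "polygon_area n p = \<bar>\<Sum>k<n. Re (p k) * Im (p (Suc k mod n)) - Re (p (Suc k mod n)) * Im (p k)\<bar> / 2"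

end

theory Submission
  imports Defs
begin

lemma chord: "norm (cis a - cis b) = 2 * \<bar>sin ((a - b)/2)\<bar>"
proof -
  have e1: "cis a = cis ((a+b)/2) * cis ((a-b)/2)"
    unfolding cis_mult by (rule arg_cong[where f=cis]) (simp add: field_simps)
  have e2: "cis b = cis ((a+b)/2) * cis (-((a-b)/2))"
    unfolding cis_mult by (rule arg_cong[where f=cis]) (simp add: field_simps)
  have "cis a - cis b = cis ((a+b)/2) * (cis ((a-b)/2) - cis (-((a-b)/2)))"
    by (subst e1, subst e2) (simp add: algebra_simps)
  also have "cis ((a-b)/2) - cis (-((a-b)/2)) = 2 * \<i> * complex_of_real (sin ((a-b)/2))"
    by (simp add: complex_eq_iff)
  finally show ?thesis by (simp add: norm_mult)
qed
lemma t3: "sin (2*x) + sin (2*y) + sin (2*z) - sin (2*(x+y+z)) = 4 * sin (x+y) * sin (y+z) * sin (x+z::real)"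
proof -
  have hx: "sin x ^2 + cos x ^2 = 1" and hy: "sin y ^2 + cos y ^2 = 1" and hz: "sin z ^2 + cos z ^2 = 1" by simp_all
  show ?thesis
    apply (simp only: distrib_left sin_add cos_add sin_double cos_double)
    using hx hy hz by algebra
qed
lemma t2: "sin (2*x) + sin (2*y) - sin (2*(x+y)) = 4 * sin x * sin y * sin (x+y::real)"
proof -
  have hx: "sin x ^2 + cos x ^2 = 1" and hy: "sin y ^2 + cos y ^2 = 1" by simp_all
  show ?thesis
    apply (simp only: distrib_left sin_add cos_add sin_double cos_double)
    using hx hy by algebra
qed
lemma pt: "sin (x+y) * sin (y+z) = sin x * sin z + sin y * sin (x+y+z::real)"
proof -
  have hx: "sin x ^2 + cos x ^2 = 1" and hy: "sin y ^2 + cos y ^2 = 1" and hz: "sin z ^2 + cos z ^2 = 1" by simp_all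
  show ?thesis
    apply (simp only: distrib_left sin_add cos_add)
    using hx hy hz by algebra
qed

lemma sum5: "(\<Sum>k<(5::nat). f k) = f 0 + f 1 + f 2 + f 3 + (f 4 :: real)"
  by (simp add: eval_nat_numeral)
lemma shoe:
  fixes a b R x0 x1 x2 x3 x4 y0 y1 y2 y3 y4 :: real
  shows "((a + R*x0)*(b + R*y1) - (a + R*x1)*(b + R*y0)) + ((a + R*x1)*(b + R*y2) - (a + R*x2)*(b + R*y1))
   + ((a + R*x2)*(b + R*y3) - (a + R*x3)*(b + R*y2)) + ((a + R*x3)*(b + R*y4) - (a + R*x4)*(b + R*y3))
   + ((a + R*x4)*(b + R*y0) - (a + R*x0)*(b + R*y4))
   = R^2 * ((y1*x0 - x1*y0) + (y2*x1 - x2*y1) + (y3*x2 - x3*y2) + (y4*x3 - x4*y3) + (y0*x4 - x0*y4))"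
  by (simp add: algebra_simps power2_eq_square)

lemma area: assumes "\<forall>k<5. p k = c + complex_of_real R * cis (\<theta> k)"
  shows "polygon_area 5 p = \<bar>R^2 * (sin (\<theta> 1 - \<theta> 0) + sin (\<theta> 2 - \<theta> 1) + sin (\<theta> 3 - \<theta> 2) + sin (\<theta> 4 - \<theta> 3) + sin (\<theta> 0 - \<theta> 4))\<bar> / 2"
proof -
  have pk: "p 0 = c + R * cis (\<theta> 0)" "p 1 = c + R * cis (\<theta> 1)" "p 2 = c + R * cis (\<theta> 2)"
     "p 3 = c + R * cis (\<theta> 3)" "p 4 = c + R * cis (\<theta> 4)" using assms by auto
  have re: "Re (p 0) = Re c + R * cos (\<theta> 0)" "Re (p 1) = Re c + R * cos (\<theta> 1)"
    "Re (p 2) = Re c + R * cos (\<theta> 2)" "Re (p 3) = Re c + R * cos (\<theta> 3)" "Re (p 4) = Re c + R * cos (\<theta> 4)"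
    "Im (p 0) = Im c + R * sin (\<theta> 0)" "Im (p 1) = Im c + R * sin (\<theta> 1)"
    "Im (p 2) = Im c + R * sin (\<theta> 2)" "Im (p 3) = Im c + R * sin (\<theta> 3)" "Im (p 4) = Im c + R * sin (\<theta> 4)"
    unfolding pk by simp_all
  define f where "f k = Re (p k) * Im (p (Suc k mod 5)) - Re (p (Suc k mod 5)) * Im (p k)" for k
  have fe: "f 0 = Re (p 0) * Im (p 1) - Re (p 1) * Im (p 0)" "f 1 = Re (p 1) * Im (p 2) - Re (p 2) * Im (p 1)"
      "f 2 = Re (p 2) * Im (p 3) - Re (p 3) * Im (p 2)" "f 3 = Re (p 3) * Im (p 4) - Re (p 4) * Im (p 3)"
      "f 4 = Re (p 4) * Im (p 0) - Re (p 0) * Im (p 4)" by (simp_all add: f_def numeral_2_eq_2)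
  have "f 0 + f 1 + f 2 + f 3 + f 4 = R^2 * (sin (\<theta> 1 - \<theta> 0) + sin (\<theta> 2 - \<theta> 1) + sin (\<theta> 3 - \<theta> 2) + sin (\<theta> 4 - \<theta> 3) + sin (\<theta> 0 - \<theta> 4))"
    unfolding fe re
      sin_diff by (rule shoe)
  then show ?thesis
    unfolding polygon_area_def f_def[symmetric] sum5 by simp
qed

lemma polyid:
  fixes R T a b c d :: real
  assumes "T^2 = (a * c + b * d) * (b * c + a * d) * (b * a + c * d)"
  shows "(8 * R^3 * T)^2 = ((2*R*b) * (2*R*c) * (2*R*a)) * (2*R*d)^3 + (((2*R*b) * (2*R*c))^2 + ((2*R*b) * (2*R*a))^2 + ((2*R*c) * (2*R*a))^2) * (2*R*d)^2
     + ((2*R*b) * (2*R*c) * (2*R*a)) * ((2*R*b)^2 + (2*R*c)^2 + (2*R*a)^2) * (2*R*d) + ((2*R*b) * (2*R*c) * (2*R*a))^2"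
proof -
  have "(8 * R^3 * T)^2 = 64 * R^6 * T^2" by (simp add: power_mult_distrib)
  also have "\<dots> = 64 * R^6 * ((a * c + b * d) * (b * c + a * d) * (b * a + c * d))" using assms by simp
  also have "\<dots> = ((2*R*b) * (2*R*c) * (2*R*a)) * (2*R*d)^3 + (((2*R*b) * (2*R*c))^2 + ((2*R*b) * (2*R*a))^2 + ((2*R*c) * (2*R*a))^2) * (2*R*d)^2
     + ((2*R*b) * (2*R*c) * (2*R*a)) * ((2*R*b)^2 + (2*R*c)^2 + (2*R*a)^2) * (2*R*d) + ((2*R*b) * (2*R*c) * (2*R*a))^2"
    by algebra
  finally show ?thesis .
qed

lemma dpt: assumes "R > 0" shows "dist (c + complex_of_real R * cis a) (c + complex_of_real R * cis b) = 2 * R * \<bar>sin ((a-b)/2)\<bar>"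
proof -
  have "dist (c + complex_of_real R * cis a) (c + complex_of_real R * cis b) = norm (complex_of_real R * (cis a - cis b))"
    by (simp add: dist_norm algebra_simps)
  also have "\<dots> = R * norm (cis a - cis b)" using assms by (simp add: norm_mult)
  finally show ?thesis by (simp add: chord)
qed

lemma core:
  fixes p :: "nat \<Rightarrow> complex" and c :: complex and R A :: real
    and a0 a1 a2 a3 a4 X pp P Q S :: real
  assumes R: "R > 0" and pdef: "\<forall>k<5. p k = c + complex_of_real R * cis (\<theta> k)"
    and ord: "\<theta> 0 < \<theta> 1" "\<theta> 1 < \<theta> 2" "\<theta> 2 < \<theta> 3" "\<theta> 3 < \<theta> 4" "\<theta> 4 < \<theta> 0 + 2 * pi"
    and hA: "A = polygon_area 5 p"
    and h0: "a0 = dist (p 2) (p 3)" and h1: "a1 = dist (p 3) (p 4)" and h2: "a2 = dist (p 4) (p 0)"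
    and h3: "a3 = dist (p 0) (p 1)" and h4: "a4 = dist (p 1) (p 2)"
    and hX: "X = dist (p 1) (p 4)"
    and hpp: "pp = a2 * a3" and hP: "P = a0 * a1 * a4"
    and hQ: "Q = a0^2 + a1^2 + a4^2"
    and hS: "S = (a0 * a1)^2 + (a0 * a4)^2 + (a1 * a4)^2"
  shows "(4 * A * R - pp * X)^2 = P * X^3 + S * X^2 + P * Q * X + P^2"
proof -
  have p: "p 0 = c + R * cis (\<theta> 0)" "p 1 = c + R * cis (\<theta> 1)" "p 2 = c + R * cis (\<theta> 2)"
     "p 3 = c + R * cis (\<theta> 3)" "p 4 = c + R * cis (\<theta> 4)" using pdef by auto
  define u where "u = (\<theta> 1 - \<theta> 0)/2"
  define x where "x = (\<theta> 2 - \<theta> 1)/2"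
  define y where "y = (\<theta> 3 - \<theta> 2)/2"
  define z where "z = (\<theta> 4 - \<theta> 3)/2"
  define w where "w = x + y + z"
  have pos: "0 < u" "0 < x" "0 < y" "0 < z" "u + x + y + z < pi"
  proof -
    have "u + x + y + z = (\<theta> 4 - \<theta> 0)/2" by (simp add: u_def x_def y_def z_def field_simps)
    moreover have "(\<theta> 4 - \<theta> 0)/2 < pi" using ord(5) by (simp add: field_simps)
    ultimately show "u + x + y + z < pi" by linarith
    show "0 < u" "0 < x" "0 < y" "0 < z"
      using ord by (simp_all add: u_def x_def y_def z_def)
  qed
  have sp: "sin u > 0" "sin x > 0" "sin y > 0" "sin z > 0" "sin w > 0" "sin (u + w) > 0"
    "sin (x+y) > 0" "sin (y+z) > 0" "sin (x+z) > 0"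
    using pos by (auto intro!: sin_gt_zero simp: w_def)
  have a3: "a3 = 2 * R * sin u"
  proof -
    have e: "(\<theta> 0 - \<theta> 1)/2 = - u" by (simp add: u_def field_simps)
    have d: "dist (p 0) (p 1) = 2 * R * \<bar>sin ((\<theta> 0 - \<theta> 1)/2)\<bar>"
      unfolding p by (rule dpt[OF R])
    show ?thesis unfolding h3 d e using sp by simp
  qed
  have a4: "a4 = 2 * R * sin x"
  proof -
    have e: "(\<theta> 1 - \<theta> 2)/2 = - x" by (simp add: x_def field_simps)
    have d: "dist (p 1) (p 2) = 2 * R * \<bar>sin ((\<theta> 1 - \<theta> 2)/2)\<bar>"
      unfolding p by (rule dpt[OF R])
    show ?thesis unfolding h4 d e using sp by simp
  qed
  have a0: "a0 = 2 * R * sin y"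
  proof -
    have e: "(\<theta> 2 - \<theta> 3)/2 = - y" by (simp add: y_def field_simps)
    have d: "dist (p 2) (p 3) = 2 * R * \<bar>sin ((\<theta> 2 - \<theta> 3)/2)\<bar>"
      unfolding p by (rule dpt[OF R])
    show ?thesis unfolding h0 d e using sp by simp
  qed
  have a1: "a1 = 2 * R * sin z"
  proof -
    have e: "(\<theta> 3 - \<theta> 4)/2 = - z" by (simp add: z_def field_simps)
    have d: "dist (p 3) (p 4) = 2 * R * \<bar>sin ((\<theta> 3 - \<theta> 4)/2)\<bar>"
      unfolding p by (rule dpt[OF R])
    show ?thesis unfolding h1 d e using sp by simp
  qed
  have a2: "a2 = 2 * R * sin (u + w)"
  proof -
    have e: "(\<theta> 4 - \<theta> 0)/2 = u + w" by (simp add: u_def w_def x_def y_def z_def field_simps)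
    have d: "dist (p 4) (p 0) = 2 * R * \<bar>sin ((\<theta> 4 - \<theta> 0)/2)\<bar>"
      unfolding p by (rule dpt[OF R])
    show ?thesis unfolding h2 d e using sp by simp
  qed
  have Xe: "X = 2 * R * sin w"
  proof -
    have e: "(\<theta> 1 - \<theta> 4)/2 = - w" by (simp add: w_def x_def y_def z_def field_simps)
    have d: "dist (p 1) (p 4) = 2 * R * \<bar>sin ((\<theta> 1 - \<theta> 4)/2)\<bar>"
      unfolding p by (rule dpt[OF R])
    show ?thesis unfolding hX d e using sp by simp
  qed
  define T where "T = sin (x+y) * sin (y+z) * sin (x+z)"
  have sig: "sin (\<theta> 1 - \<theta> 0) + sin (\<theta> 2 - \<theta> 1) + sin (\<theta> 3 - \<theta> 2) + sin (\<theta> 4 - \<theta> 3) + sin (\<theta> 0 - \<theta> 4)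
     = 4 * sin u * sin w * sin (u + w) + 4 * T"
  proof -
    have e: "\<theta> 1 - \<theta> 0 = 2*u" "\<theta> 2 - \<theta> 1 = 2*x" "\<theta> 3 - \<theta> 2 = 2*y" "\<theta> 4 - \<theta> 3 = 2*z"
      "\<theta> 0 - \<theta> 4 = - (2 * (u + w))"
      by (simp_all add: u_def w_def x_def y_def z_def field_simps)
    have "sin (2*u) + sin (2*w) - sin (2*(u+w)) = 4 * sin u * sin w * sin (u+w)" by (rule t2)
    moreover have "sin (2*x) + sin (2*y) + sin (2*z) - sin (2*w) = 4 * T"
      unfolding T_def w_def by (subst t3) (simp add: mult.assoc)
    moreover have m: "sin (-(2*(u+w))) = - sin (2*(u+w))" by (rule sin_minus)
    ultimately show ?thesis unfolding e m by linarith
  qed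
  have Tpos: "T > 0" using sp by (simp add: T_def)
  have Ae: "A = R^2 / 2 * (4 * sin u * sin w * sin (u + w) + 4 * T)"
    using hA area[OF pdef] sig sp Tpos R by (simp add: abs_mult)
  have lhs: "4 * A * R - pp * X = 8 * R^3 * T"
    unfolding Ae hpp a2 a3 Xe by (simp add: power2_eq_square power3_eq_cube algebra_simps)
  have pt1: "sin (x+y) * sin (y+z) = sin x * sin z + sin y * sin w" unfolding w_def by (rule pt)
  have pt2: "sin (x+y) * sin (x+z) = sin y * sin z + sin x * sin w"
    using pt[of y x z] by (simp add: w_def add_ac)
  have pt3: "sin (y+z) * sin (x+z) = sin y * sin x + sin z * sin w"
    using pt[of y z x] by (simp add: w_def add_ac)
  have "T^2 = (sin (x+y) * sin (y+z)) * (sin (x+y) * sin (x+z)) * (sin (y+z) * sin (x+z))"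
    by (simp add: T_def power2_eq_square mult_ac)
  then have T2: "T^2 = (sin x * sin z + sin y * sin w) * (sin y * sin z + sin x * sin w) * (sin y * sin x + sin z * sin w)"
    unfolding pt1 pt2 pt3 .
  show ?thesis
    by (unfold lhs, unfold hP hQ hS a0 a1 a4 Xe, rule polyid[OF T2])
qed

theorem proposition4:
  fixes p :: "nat \<Rightarrow> complex" and c :: complex and R A :: real
    and a0 a1 a2 a3 a4 X pp P Q S :: real
  assumes "inscribed_convex_pentagon p c R"
    and "A = polygon_area 5 p"
    and "a0 = dist (p 2) (p 3)" and "a1 = dist (p 3) (p 4)" and "a2 = dist (p 4) (p 0)"
    and "a3 = dist (p 0) (p 1)" and "a4 = dist (p 1) (p 2)"
    and "X = dist (p 1) (p 4)"
    and "pp = a2 * a3" and "P = a0 * a1 * a4"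
    and "Q = a0^2 + a1^2 + a4^2"
    and "S = (a0 * a1)^2 + (a0 * a4)^2 + (a1 * a4)^2"
  shows "(4 * A * R - pp * X)^2 = P * X^3 + S * X^2 + P * Q * X + P^2"
proof -
  obtain \<theta> :: "nat \<Rightarrow> real" where R: "R > 0" and pd: "\<forall>k<5. p k = c + complex_of_real R * cis (\<theta> k)"
    and ord: "(\<theta> 0 < \<theta> 1 \<and> \<theta> 1 < \<theta> 2 \<and> \<theta> 2 < \<theta> 3 \<and> \<theta> 3 < \<theta> 4 \<and> \<theta> 4 < \<theta> 0 + 2 * pi) \<or>
         (\<theta> 0 > \<theta> 1 \<and> \<theta> 1 > \<theta> 2 \<and> \<theta> 2 > \<theta> 3 \<and> \<theta> 3 > \<theta> 4 \<and> \<theta> 4 > \<theta> 0 - 2 * pi)"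
    using assms(1) unfolding inscribed_convex_pentagon_def by blast
  from ord show ?thesis
  proof
    assume o: "\<theta> 0 < \<theta> 1 \<and> \<theta> 1 < \<theta> 2 \<and> \<theta> 2 < \<theta> 3 \<and> \<theta> 3 < \<theta> 4 \<and> \<theta> 4 < \<theta> 0 + 2 * pi"
    show ?thesis
      by (rule core[OF R pd _ _ _ _ _ assms(2-12)]) (use o in auto)
  next
    assume o: "\<theta> 0 > \<theta> 1 \<and> \<theta> 1 > \<theta> 2 \<and> \<theta> 2 > \<theta> 3 \<and> \<theta> 3 > \<theta> 4 \<and> \<theta> 4 > \<theta> 0 - 2 * pi"
    define q where "q k = cnj (p k)" for k
    have qd: "\<forall>k<5. q k = cnj c + complex_of_real R * cis ((\<lambda>k. - \<theta> k) k)"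
      using pd by (simp add: q_def cis_cnj)
    have dq: "dist (q i) (q j) = dist (p i) (p j)" for i j
      unfolding q_def dist_norm by (metis complex_cnj_diff complex_mod_cnj)
    have sq: "(\<Sum>k<5. Re (q k) * Im (q (Suc k mod 5)) - Re (q (Suc k mod 5)) * Im (q k))
      = - (\<Sum>k<5. Re (p k) * Im (p (Suc k mod 5)) - Re (p (Suc k mod 5)) * Im (p k))"
      unfolding sum_negf[symmetric] q_def by (rule sum.cong) (simp_all add: algebra_simps)
    have aq: "polygon_area 5 q = polygon_area 5 p"
      unfolding polygon_area_def sq by simp
    show ?thesis
      by (rule core[OF R qd _ _ _ _ _ assms(2)[folded aq] assms(3-8)[folded dq] assms(9-12)]) (use o in auto)
  qed
qed

end
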